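(* Let $\Phi$ be a probabilistic cellular automaton on $\mathcal{A}^{\mathbb{Z}}$ of radius $r$, i.e. with neighborhood $\mathcal{N}\subset[\![-r,r]\!]$. Then the action $\mu\mapsto\Phi\mu$ is $2^r$-Lipschitz on $\mathcal{M}(\mathcal{A}^{\mathbb{Z}})$ for the distance $d_{\mathcal{M}}$, i.e. $d_{\mathcal{M}}(\Phi\mu,\Phi\nu)\le 2^r d_{\mathcal{M}}(\mu,\nu)$ for all $\mu,\nu\in\mathcal{M}(\mathcal{A}^{\mathbb{Z}})$.
   Context: $\mathcal{A}$ is a finite alphabet. A PCA with finite neighborhood $\mathcal{N}\subset\mathbb{Z}$ is given by a stochastic matrix $\varphi:\mathcal{A}^{\mathcal{N}}\times\mathcal{A}\to[0,1]$ (rows summing to $1$); its transition kernel is $\Phi(x,[w]_U)=\prod_{i\in U}\varphi(x_{i+\mathcal{N}},w_i)$ for finite $U\subset\mathbb{Z}$, $w\in\mathcal{A}^U$, and it acts on probability measures by $\Phi\mu(E)=\int\Phi(x,E)\,d\mu(x)$. $\mathcal{M}(\mathcal{A}^{\mathbb{Z}})$ is the set of shift-invariant Borel probability measures on $\mathcal{A}^{\mathbb{Z}}$, and $d_{\mathcal{M}}(\mu,\nu)=\sum_{n\ge0}2^{-n}\|\mu-\nu\|_{[-n,n]}$ with $\|\mu-\nu\|_U=\frac12\sum_{u\in\mathcal{A}^U}|\mu([u])-\nu([u])|$, $[u]$ the cylinder $\{x:x_U=u\}$. *)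

theory Defs
  imports "HOL-Probability.Probability"
begin

text \<open>Configuration space A^Z with its product (= Borel) sigma-algebra.\<close>
definition config_space :: "(int \<Rightarrow> 'a) measure" where
  "config_space = PiM UNIV (\<lambda>_::int. count_space (UNIV::'a set))"

definition cyl :: "int set \<Rightarrow> (int \<Rightarrow> 'a) \<Rightarrow> (int \<Rightarrow> 'a) set" where
  "cyl U u = {x. \<forall>i\<in>U. x i = u i}"

definition shift :: "(int \<Rightarrow> 'a) \<Rightarrow> (int \<Rightarrow> 'a)" where
  "shift x = (\<lambda>i. x (i + 1))"

definition shift_inv_measures :: "(int \<Rightarrow> 'a) measure set" where
  "shift_inv_measures = {\<mu>. sets \<mu> = sets config_space \<and> prob_space \<mu>
                              \<and> distr \<mu> config_space shift = \<mu>}"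

text \<open>Stochastic matrix phi : A^N x A -> [0,1]; patterns in A^N are
  extensional functions on N.\<close>
definition stochastic :: "int set \<Rightarrow> ((int \<Rightarrow> 'a::finite) \<Rightarrow> 'a \<Rightarrow> real) \<Rightarrow> bool" where
  "stochastic N \<phi> \<longleftrightarrow> (\<forall>u \<in> PiE N (\<lambda>_. UNIV).
       (\<forall>a. 0 \<le> \<phi> u a \<and> \<phi> u a \<le> 1) \<and> (\<Sum>a\<in>UNIV. \<phi> u a) = 1)"

definition local_pattern :: "int set \<Rightarrow> (int \<Rightarrow> 'a) \<Rightarrow> int \<Rightarrow> (int \<Rightarrow> 'a)" where
  "local_pattern N x i = (\<lambda>j\<in>N. x (i + j))"

text \<open>Transition kernel Phi(x, .): product over i of the law phi(x_{i+N}, .),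
  so that Phi(x,[w]_U) = prod_{i in U} phi(x_{i+N}, w_i).\<close>
definition pca_kernel :: "int set \<Rightarrow> ((int \<Rightarrow> 'a::finite) \<Rightarrow> 'a \<Rightarrow> real)
                          \<Rightarrow> (int \<Rightarrow> 'a) \<Rightarrow> (int \<Rightarrow> 'a) measure" where
  "pca_kernel N \<phi> x = PiM UNIV (\<lambda>i::int. point_measure (UNIV::'a set)
                          (\<lambda>a. ennreal (\<phi> (local_pattern N x i) a)))"

definition pca_act :: "int set \<Rightarrow> ((int \<Rightarrow> 'a::finite) \<Rightarrow> 'a \<Rightarrow> real)
                       \<Rightarrow> (int \<Rightarrow> 'a) measure \<Rightarrow> (int \<Rightarrow> 'a) measure" where
  "pca_act N \<phi> \<mu> = \<mu> \<bind> pca_kernel N \<phi>"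

definition cyl_dist :: "int set \<Rightarrow> (int \<Rightarrow> 'a::finite) measure \<Rightarrow> (int \<Rightarrow> 'a) measure \<Rightarrow> real" where
  "cyl_dist U \<mu> \<nu> = (1/2) * (\<Sum>u\<in>PiE U (\<lambda>_. UNIV).
        \<bar>measure \<mu> (cyl U u) - measure \<nu> (cyl U u)\<bar>)"

definition dM :: "(int \<Rightarrow> 'a::finite) measure \<Rightarrow> (int \<Rightarrow> 'a) measure \<Rightarrow> real" where
  "dM \<mu> \<nu> = (\<Sum>n::nat. (1/2)^n * cyl_dist {- int n..int n} \<mu> \<nu>)"

end

theory Submission imports Defs begin

lemma space_config: "space config_space = UNIV"
  unfolding config_space_def by (auto simp: space_PiM PiE_def extensional_def)

lemma cyl_emb: assumes "\<And>i. space (M i) = UNIV"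
  shows "prod_emb UNIV M V (PiE V (\<lambda>i. {v i})) = cyl V v"
  by (auto simp: prod_emb_def cyl_def assms PiE_def extensional_def restrict_def Pi_iff)

lemma cyl_sets: "finite V \<Longrightarrow> cyl V v \<in> sets config_space"
proof -
  assume "finite V"
  have "prod_emb UNIV (\<lambda>_::int. count_space (UNIV::'a set)) V (PiE V (\<lambda>i. {v i})) \<in> sets config_space"
    unfolding config_space_def using \<open>finite V\<close> by (intro sets_PiM_I) auto
  then show ?thesis by (subst (asm) cyl_emb) auto
qed

lemma finite_dep_sum:
  fixes f :: "(int \<Rightarrow> 'a::finite) \<Rightarrow> 'b::semiring_1"
  assumes "finite V" and dep: "\<And>x y. (\<And>j. j \<in> V \<Longrightarrow> x j = y j) \<Longrightarrow> f x = f y"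
  shows "f x = (\<Sum>v\<in>PiE V (\<lambda>_. UNIV). f v * indicator (cyl V v) x)"
proof -
  have "(\<Sum>v\<in>PiE V (\<lambda>_. UNIV). f v * indicator (cyl V v) x)
      = (\<Sum>v\<in>PiE V (\<lambda>_. UNIV). if v = restrict x V then f v else 0)"
  proof (rule sum.cong)
    fix v :: "int \<Rightarrow> 'a" assume v: "v \<in> PiE V (\<lambda>_. UNIV)"
    have "x \<in> cyl V v \<longleftrightarrow> v = restrict x V"
      using v by (auto simp: cyl_def PiE_def extensional_def restrict_def fun_eq_iff)
    then show "f v * indicator (cyl V v) x = (if v = restrict x V then f v else 0)"
      by (auto simp: indicator_def)
  qed simp
  also have "\<dots> = f (restrict x V)"
    using \<open>finite V\<close> by (subst sum.delta) (auto intro: finite_PiE)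
  also have "\<dots> = f x" by (rule dep) auto
  finally show ?thesis by (rule sym)
qed

lemma ind_meas: "finite V \<Longrightarrow> (\<lambda>x. c * indicator (cyl V v) x :: real) \<in> borel_measurable config_space"
  using cyl_sets[of V v] by simp

lemma finite_dep_meas:
  fixes f :: "(int \<Rightarrow> 'a::finite) \<Rightarrow> real"
  assumes "finite V" and dep: "\<And>x y. (\<And>j. j \<in> V \<Longrightarrow> x j = y j) \<Longrightarrow> f x = f y"
  shows "f \<in> borel_measurable config_space"
proof -
  have eq: "f x = (\<Sum>v\<in>PiE V (\<lambda>_. UNIV). f v * indicator (cyl V v) x)" for x
    by (rule finite_dep_sum[OF assms])
  have "(\<lambda>x. \<Sum>v\<in>PiE V (\<lambda>_. UNIV). f v * indicator (cyl V v) x) \<in> borel_measurable config_space"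
    by (rule borel_measurable_sum) (rule ind_meas[OF \<open>finite V\<close>])
  then show ?thesis by (simp only: eq[symmetric])
qed
lemma nn_cyl:
  fixes f :: "(int \<Rightarrow> 'a::finite) \<Rightarrow> real"
  assumes S: "sets \<mu> = sets config_space"
  assumes "finite V" and dep: "\<And>x y. (\<And>j. j \<in> V \<Longrightarrow> x j = y j) \<Longrightarrow> f x = f y"
  shows "(\<integral>\<^sup>+x. ennreal (f x) \<partial>\<mu>) = (\<Sum>v\<in>PiE V (\<lambda>_. UNIV). ennreal (f v) * emeasure \<mu> (cyl V v))"
proof -
  have dep': "ennreal (f x) = ennreal (f y)" if h: "\<And>j. j \<in> V \<Longrightarrow> x j = y j" for x y
    using dep[OF h] by simp
  have eq: "ennreal (f x) = (\<Sum>v\<in>PiE V (\<lambda>_. UNIV). ennreal (f v) * indicator (cyl V v) x)" for x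
    by (rule finite_dep_sum[OF \<open>finite V\<close> dep'])
  have "(\<integral>\<^sup>+x. ennreal (f x) \<partial>\<mu>) = (\<integral>\<^sup>+x. (\<Sum>v\<in>PiE V (\<lambda>_. UNIV). ennreal (f v) * indicator (cyl V v) x) \<partial>\<mu>)"
    by (rule nn_integral_cong) (rule eq)
  also have "\<dots> = (\<Sum>v\<in>PiE V (\<lambda>_. UNIV). (\<integral>\<^sup>+x. ennreal (f v) * indicator (cyl V v) x \<partial>\<mu>))"
  proof (rule nn_integral_sum)
    fix v :: "int \<Rightarrow> 'a"
    have "cyl V v \<in> sets \<mu>" using cyl_sets[OF \<open>finite V\<close>] S by simp
    then show "(\<lambda>x. ennreal (f v) * indicator (cyl V v) x) \<in> borel_measurable \<mu>" by simp
  qed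
  also have "\<dots> = (\<Sum>v\<in>PiE V (\<lambda>_. UNIV). ennreal (f v) * emeasure \<mu> (cyl V v))"
  proof (rule sum.cong[OF refl])
    fix v :: "int \<Rightarrow> 'a"
    have "cyl V v \<in> sets \<mu>" using cyl_sets[OF \<open>finite V\<close>] S by simp
    then show "(\<integral>\<^sup>+x. ennreal (f v) * indicator (cyl V v) x \<partial>\<mu>) = ennreal (f v) * emeasure \<mu> (cyl V v)"
      by (rule nn_integral_cmult_indicator)
  qed
  finally show ?thesis .
qed


lemma lp_PiE: "local_pattern N x i \<in> PiE N (\<lambda>_. UNIV)"
  unfolding local_pattern_def by simp

lemma pm_emeasure:
  assumes "stochastic N \<phi>"
  shows "emeasure (point_measure UNIV (\<lambda>a. ennreal (\<phi> (local_pattern N x i) a))) X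
     = ennreal (\<Sum>a\<in>X. \<phi> (local_pattern N x i) a)"
proof -
  have nn: "\<And>a. 0 \<le> \<phi> (local_pattern N x i) a"
    using assms lp_PiE[of N x i] unfolding stochastic_def by blast
  have "emeasure (point_measure UNIV (\<lambda>a. ennreal (\<phi> (local_pattern N x i) a))) X
     = (\<Sum>a\<in>X. ennreal (\<phi> (local_pattern N x i) a))"
    by (rule emeasure_point_measure_finite) auto
  also have "\<dots> = ennreal (\<Sum>a\<in>X. \<phi> (local_pattern N x i) a)"
    using nn by simp
  finally show ?thesis .
qed

lemma pm_prob:
  assumes "stochastic N \<phi>"
  shows "prob_space (point_measure UNIV (\<lambda>a. ennreal (\<phi> (local_pattern N x i) a)))"
proof
  have "(\<Sum>a\<in>UNIV. \<phi> (local_pattern N x i) a) = 1"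
    using assms lp_PiE[of N x i] unfolding stochastic_def by blast
  then show "emeasure (point_measure UNIV (\<lambda>a. ennreal (\<phi> (local_pattern N x i) a)))
      (space (point_measure UNIV (\<lambda>a. ennreal (\<phi> (local_pattern N x i) a)))) = 1"
    using pm_emeasure[OF assms, of x i UNIV] by (simp add: space_point_measure)
qed

lemma sets_kernel: "sets (pca_kernel N \<phi> x) = sets config_space"
  unfolding pca_kernel_def config_space_def
  by (rule sets_PiM_cong) (auto simp: sets_point_measure)

lemma kernel_emb:
  fixes \<phi> :: "(int \<Rightarrow> 'a::finite) \<Rightarrow> 'a \<Rightarrow> real"
  assumes "stochastic N \<phi>" "finite J"
  shows "emeasure (pca_kernel N \<phi> x) (prod_emb UNIV (\<lambda>_::int. count_space (UNIV::'a set)) J (PiE J X))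
    = ennreal (\<Prod>i\<in>J. \<Sum>a\<in>X i. \<phi> (local_pattern N x i) a)"
proof -
  define Mi where "Mi = (\<lambda>i::int. point_measure (UNIV::'a set) (\<lambda>a. ennreal (\<phi> (local_pattern N x i) a)))"
  interpret P: product_prob_space Mi UNIV
    by (rule product_prob_spaceI) (unfold Mi_def, rule pm_prob[OF assms(1)])
  have "prod_emb UNIV (\<lambda>_::int. count_space (UNIV::'a set)) J (PiE J X) = prod_emb UNIV Mi J (PiE J X)"
    by (simp add: prod_emb_def Mi_def space_point_measure)
  then have "emeasure (pca_kernel N \<phi> x) (prod_emb UNIV (\<lambda>_::int. count_space (UNIV::'a set)) J (PiE J X))
     = emeasure (PiM UNIV Mi) (prod_emb UNIV Mi J (PiE J X))"
    by (simp add: pca_kernel_def Mi_def)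
  also have "\<dots> = (\<Prod>i\<in>J. emeasure (Mi i) (X i))"
    by (rule P.emeasure_PiM_emb) (auto simp: assms Mi_def sets_point_measure)
  also have "\<dots> = (\<Prod>i\<in>J. ennreal (\<Sum>a\<in>X i. \<phi> (local_pattern N x i) a))"
    unfolding Mi_def by (simp only: pm_emeasure[OF assms(1)])
  also have "\<dots> = ennreal (\<Prod>i\<in>J. \<Sum>a\<in>X i. \<phi> (local_pattern N x i) a)"
  proof (rule prod_ennreal)
    fix i show "0 \<le> (\<Sum>a\<in>X i. \<phi> (local_pattern N x i) a)"
      using assms(1) lp_PiE[of N x i] unfolding stochastic_def by (intro sum_nonneg) blast
  qed
  finally show ?thesis .
qed

lemma kernel_prob:
  fixes \<phi> :: "(int \<Rightarrow> 'a::finite) \<Rightarrow> 'a \<Rightarrow> real"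
  assumes "stochastic N \<phi>"
  shows "prob_space (pca_kernel N \<phi> x)"
proof -
  define Mi where "Mi = (\<lambda>i::int. point_measure (UNIV::'a set) (\<lambda>a. ennreal (\<phi> (local_pattern N x i) a)))"
  interpret P: product_prob_space Mi UNIV
    by (rule product_prob_spaceI) (unfold Mi_def, rule pm_prob[OF assms(1)])
  show ?thesis unfolding pca_kernel_def using P.P.prob_space_axioms by (simp add: Mi_def)
qed


lemma lp_dep:
  assumes "\<And>j. j \<in> N \<Longrightarrow> x (i + j) = y (i + j)"
  shows "local_pattern N x i = local_pattern N y i"
  unfolding local_pattern_def using assms by (intro restrict_ext) auto

lemma kernel_meas:
  fixes \<phi> :: "(int \<Rightarrow> 'a::finite) \<Rightarrow> 'a \<Rightarrow> real"
  assumes st: "stochastic N \<phi>" and fN: "finite N"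
  shows "pca_kernel N \<phi> \<in> measurable config_space (subprob_algebra config_space)"
proof (rule measurable_subprob_algebra_generated[where \<Omega>="PiE UNIV (\<lambda>_. space (count_space UNIV))"
      and G="prod_algebra UNIV (\<lambda>_::int. count_space (UNIV::'a set))"])
  show "sets config_space = sigma_sets (PiE UNIV (\<lambda>_. space (count_space UNIV))) (prod_algebra UNIV (\<lambda>_::int. count_space (UNIV::'a set)))"
    unfolding config_space_def by (rule sets_PiM)
  show "Int_stable (prod_algebra UNIV (\<lambda>_::int. count_space (UNIV::'a set)))"
    by (rule Int_stable_prod_algebra)
  show "prod_algebra UNIV (\<lambda>_::int. count_space (UNIV::'a set)) \<subseteq> Pow (PiE UNIV (\<lambda>_. space (count_space UNIV)))"
    by (rule prod_algebra_sets_into_space)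
  fix a
  show "subprob_space (pca_kernel N \<phi> a)"
    using kernel_prob[OF st] by (rule prob_space_imp_subprob_space)
  show "sets (pca_kernel N \<phi> a) = sets config_space" by (rule sets_kernel)
next
  fix A assume "A \<in> prod_algebra UNIV (\<lambda>_::int. count_space (UNIV::'a set))"
  then obtain J E where A: "A = prod_emb UNIV (\<lambda>_::int. count_space (UNIV::'a set)) J (PiE J E)"
    and fJ: "finite J" by (rule prod_algebraE) blast
  define P where "P = (\<lambda>x. \<Prod>i\<in>J. \<Sum>a\<in>E i. \<phi> (local_pattern N x i) a)"
  have "(\<lambda>x. emeasure (pca_kernel N \<phi> x) A) = (\<lambda>x. ennreal (P x))"
    unfolding A P_def by (rule ext) (rule kernel_emb[OF st fJ])
  moreover have "P \<in> borel_measurable config_space"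
  proof (rule finite_dep_meas[where V="\<Union>i\<in>J. (\<lambda>j. i + j) ` N"])
    show "finite (\<Union>i\<in>J. (\<lambda>j. i + j) ` N)" using fJ fN by auto
    fix x y :: "int \<Rightarrow> 'a"
    assume h: "\<And>j. j \<in> (\<Union>i\<in>J. (\<lambda>j. i + j) ` N) \<Longrightarrow> x j = y j"
    have "local_pattern N x i = local_pattern N y i" if "i \<in> J" for i
      using that h by (intro lp_dep) auto
    then show "P x = P y" unfolding P_def by (intro prod.cong) auto
  qed
  ultimately show "(\<lambda>x. emeasure (pca_kernel N \<phi> x) A) \<in> borel_measurable config_space"
    by simp
next
  have "emeasure (pca_kernel N \<phi> x) (PiE UNIV (\<lambda>_. space (count_space UNIV))) = 1" for x
  proof -
    interpret prob_space "pca_kernel N \<phi> x" by (rule kernel_prob[OF st])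
    have "space (pca_kernel N \<phi> x) = space config_space"
      using sets_eq_imp_space_eq[OF sets_kernel] .
    then have "PiE UNIV (\<lambda>_. space (count_space UNIV)) = space (pca_kernel N \<phi> x)"
      by (simp add: config_space_def space_PiM)
    then show ?thesis using emeasure_space_1 by metis
  qed
  then show "(\<lambda>x. emeasure (pca_kernel N \<phi> x) (PiE UNIV (\<lambda>_. space (count_space UNIV)))) \<in> borel_measurable config_space"
    by simp
qed


lemma phi_nn: "stochastic N \<phi> \<Longrightarrow> 0 \<le> \<phi> (local_pattern N x i) a"
  using lp_PiE[of N x i] unfolding stochastic_def by blast

lemma space_sets_config: "sets \<mu> = sets config_space \<Longrightarrow> space \<mu> = UNIV"
  using sets_eq_imp_space_eq space_config by metis

lemma act_cyl_real:
  fixes \<phi> :: "(int \<Rightarrow> 'a::finite) \<Rightarrow> 'a \<Rightarrow> real" and \<mu> :: "(int \<Rightarrow> 'a) measure"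
  assumes st: "stochastic N \<phi>" and fN: "finite N" and S: "sets \<mu> = sets config_space"
    and pr: "prob_space \<mu>" and fU: "finite U" and fV: "finite V"
    and sub: "\<And>i j. i \<in> U \<Longrightarrow> j \<in> N \<Longrightarrow> i + j \<in> V"
  shows "measure (pca_act N \<phi> \<mu>) (cyl U w)
     = (\<Sum>v\<in>PiE V (\<lambda>_. UNIV). (\<Prod>i\<in>U. \<phi> (local_pattern N v i) (w i)) * measure \<mu> (cyl V v))"
proof -
  define P where "P = (\<lambda>x. \<Prod>i\<in>U. \<phi> (local_pattern N x i) (w i))"
  have Pnn: "0 \<le> P x" for x unfolding P_def by (intro prod_nonneg) (rule phi_nn[OF st])
  have km: "pca_kernel N \<phi> \<in> measurable \<mu> (subprob_algebra config_space)"
    using kernel_meas[OF st fN] by (simp add: measurable_cong_sets[OF S refl])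
  have fm: "finite_measure \<mu>" using pr unfolding prob_space_def by blast
  have sp: "space \<mu> \<noteq> {}" using space_sets_config[OF S] by simp
  have cylU: "cyl U w = prod_emb UNIV (\<lambda>_::int. count_space (UNIV::'a set)) U (PiE U (\<lambda>i. {w i}))"
    by (rule cyl_emb[symmetric]) simp
  have "emeasure (pca_act N \<phi> \<mu>) (cyl U w) = (\<integral>\<^sup>+x. emeasure (pca_kernel N \<phi> x) (cyl U w) \<partial>\<mu>)"
    unfolding pca_act_def by (rule emeasure_bind[OF sp km cyl_sets[OF fU]])
  also have "\<dots> = (\<integral>\<^sup>+x. ennreal (P x) \<partial>\<mu>)"
  proof (rule nn_integral_cong)
    fix x
    show "emeasure (pca_kernel N \<phi> x) (cyl U w) = ennreal (P x)"
      unfolding cylU P_def by (subst kernel_emb[OF st fU]) simp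
  qed
  also have "\<dots> = (\<Sum>v\<in>PiE V (\<lambda>_. UNIV). ennreal (P v) * emeasure \<mu> (cyl V v))"
  proof (rule nn_cyl[OF S fV])
    fix x y :: "int \<Rightarrow> 'a"
    assume h: "\<And>j. j \<in> V \<Longrightarrow> x j = y j"
    have "local_pattern N x i = local_pattern N y i" if "i \<in> U" for i
      using that h sub by (intro lp_dep) auto
    then show "P x = P y" unfolding P_def by (intro prod.cong) auto
  qed
  also have "\<dots> = (\<Sum>v\<in>PiE V (\<lambda>_. UNIV). ennreal (P v * measure \<mu> (cyl V v)))"
    using finite_measure.emeasure_eq_measure[OF fm] by (intro sum.cong refl) (simp add: ennreal_mult[OF Pnn measure_nonneg])
  also have "\<dots> = ennreal (\<Sum>v\<in>PiE V (\<lambda>_. UNIV). P v * measure \<mu> (cyl V v))"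
    using Pnn by (intro sum_ennreal) simp
  finally show ?thesis unfolding measure_def P_def
    using Pnn by (simp add: P_def sum_nonneg)
qed

lemma cyl_total:
  fixes \<mu> :: "(int \<Rightarrow> 'a::finite) measure"
  assumes S: "sets \<mu> = sets config_space" and pr: "prob_space \<mu>" and fV: "finite V"
  shows "(\<Sum>v\<in>PiE V (\<lambda>_. UNIV). measure \<mu> (cyl V v)) = 1"
proof -
  have fm: "finite_measure \<mu>" using pr unfolding prob_space_def by blast
  have "(\<integral>\<^sup>+x. ennreal ((\<lambda>_. 1::real) x) \<partial>\<mu>) = (\<Sum>v\<in>PiE V (\<lambda>_. UNIV). ennreal ((\<lambda>_. 1::real) v) * emeasure \<mu> (cyl V v))"
    by (rule nn_cyl[OF S fV]) simp
  also have "\<dots> = ennreal (\<Sum>v\<in>PiE V (\<lambda>_. UNIV). measure \<mu> (cyl V v))"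
    using finite_measure.emeasure_eq_measure[OF fm] by simp
  finally have "ennreal (\<Sum>v\<in>PiE V (\<lambda>_. UNIV). measure \<mu> (cyl V v)) = 1"
    using prob_space.emeasure_space_1[OF pr] by simp
  then show ?thesis by (simp add: sum_nonneg)
qed

lemma psum1:
  fixes \<phi> :: "(int \<Rightarrow> 'a::finite) \<Rightarrow> 'a \<Rightarrow> real"
  assumes st: "stochastic N \<phi>" and fU: "finite U"
  shows "(\<Sum>w\<in>PiE U (\<lambda>_. UNIV). \<Prod>i\<in>U. \<phi> (local_pattern N v i) (w i)) = 1"
proof -
  have "(\<Sum>w\<in>PiE U (\<lambda>_. UNIV). \<Prod>i\<in>U. \<phi> (local_pattern N v i) (w i))
      = (\<Prod>i\<in>U. \<Sum>a\<in>UNIV. \<phi> (local_pattern N v i) a)"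
    by (rule prod_sum_PiE[symmetric]) (auto simp: fU)
  also have "\<dots> = 1"
    using st lp_PiE[of N v] unfolding stochastic_def by (intro prod.neutral) blast
  finally show ?thesis .
qed


lemma cyl_dist_le:
  fixes \<phi> :: "(int \<Rightarrow> 'a::finite) \<Rightarrow> 'a \<Rightarrow> real" and \<mu> \<nu> :: "(int \<Rightarrow> 'a) measure"
  assumes st: "stochastic N \<phi>" and fN: "finite N"
    and S1: "sets \<mu> = sets config_space" and pr1: "prob_space \<mu>"
    and S2: "sets \<nu> = sets config_space" and pr2: "prob_space \<nu>"
    and fU: "finite U" and fV: "finite V"
    and sub: "\<And>i j. i \<in> U \<Longrightarrow> j \<in> N \<Longrightarrow> i + j \<in> V"
  shows "cyl_dist U (pca_act N \<phi> \<mu>) (pca_act N \<phi> \<nu>) \<le> cyl_dist V \<mu> \<nu>"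
proof -
  define P where "P = (\<lambda>w v. \<Prod>i\<in>U. \<phi> (local_pattern N v i) (w i))"
  define m where "m = (\<lambda>v. measure \<mu> (cyl V v) - measure \<nu> (cyl V v))"
  have Pnn: "0 \<le> P w v" for w v unfolding P_def by (intro prod_nonneg) (rule phi_nn[OF st])
  have eq: "measure (pca_act N \<phi> \<mu>) (cyl U w) - measure (pca_act N \<phi> \<nu>) (cyl U w)
      = (\<Sum>v\<in>PiE V (\<lambda>_. UNIV). P w v * m v)" for w
    using act_cyl_real[OF st fN S1 pr1 fU fV sub, of w] act_cyl_real[OF st fN S2 pr2 fU fV sub, of w]
    unfolding P_def m_def by (simp add: sum_subtractf right_diff_distrib)
  have "(\<Sum>w\<in>PiE U (\<lambda>_. UNIV). \<bar>measure (pca_act N \<phi> \<mu>) (cyl U w) - measure (pca_act N \<phi> \<nu>) (cyl U w)\<bar>)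
      = (\<Sum>w\<in>PiE U (\<lambda>_. UNIV). \<bar>\<Sum>v\<in>PiE V (\<lambda>_. UNIV). P w v * m v\<bar>)"
    by (simp only: eq)
  also have "\<dots> \<le> (\<Sum>w\<in>PiE U (\<lambda>_. UNIV). \<Sum>v\<in>PiE V (\<lambda>_. UNIV). P w v * \<bar>m v\<bar>)"
  proof (rule sum_mono)
    fix w
    have "\<bar>\<Sum>v\<in>PiE V (\<lambda>_. UNIV). P w v * m v\<bar> \<le> (\<Sum>v\<in>PiE V (\<lambda>_. UNIV). \<bar>P w v * m v\<bar>)"
      by (rule sum_abs)
    also have "\<dots> = (\<Sum>v\<in>PiE V (\<lambda>_. UNIV). P w v * \<bar>m v\<bar>)"
      using Pnn by (simp add: abs_mult)
    finally show "\<bar>\<Sum>v\<in>PiE V (\<lambda>_. UNIV). P w v * m v\<bar> \<le> (\<Sum>v\<in>PiE V (\<lambda>_. UNIV). P w v * \<bar>m v\<bar>)" .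
  qed
  also have "\<dots> = (\<Sum>v\<in>PiE V (\<lambda>_. UNIV). (\<Sum>w\<in>PiE U (\<lambda>_. UNIV). P w v) * \<bar>m v\<bar>)"
    by (subst sum.swap) (simp add: sum_distrib_right)
  also have "\<dots> = (\<Sum>v\<in>PiE V (\<lambda>_. UNIV). \<bar>m v\<bar>)"
    unfolding P_def using psum1[OF st fU] by simp
  finally show ?thesis unfolding cyl_dist_def m_def by simp
qed

lemma cyl_dist_bounds:
  fixes \<mu> \<nu> :: "(int \<Rightarrow> 'a::finite) measure"
  assumes S1: "sets \<mu> = sets config_space" and pr1: "prob_space \<mu>"
    and S2: "sets \<nu> = sets config_space" and pr2: "prob_space \<nu>" and fV: "finite V"
  shows "0 \<le> cyl_dist V \<mu> \<nu>" "cyl_dist V \<mu> \<nu> \<le> 1"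
proof -
  show "0 \<le> cyl_dist V \<mu> \<nu>" unfolding cyl_dist_def by (simp add: sum_nonneg)
  have "(\<Sum>v\<in>PiE V (\<lambda>_. UNIV). \<bar>measure \<mu> (cyl V v) - measure \<nu> (cyl V v)\<bar>)
     \<le> (\<Sum>v\<in>PiE V (\<lambda>_. UNIV). measure \<mu> (cyl V v) + measure \<nu> (cyl V v))"
    by (intro sum_mono) (simp add: abs_le_iff)
  also have "\<dots> = 2"
    using cyl_total[OF S1 pr1 fV] cyl_total[OF S2 pr2 fV] by (simp add: sum.distrib)
  finally show "cyl_dist V \<mu> \<nu> \<le> 1" unfolding cyl_dist_def by simp
qed

theorem mainTheorem4:
  fixes N :: "int set" and r :: nat
    and \<phi> :: "(int \<Rightarrow> 'a::finite) \<Rightarrow> 'a \<Rightarrow> real"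
    and \<mu> \<nu> :: "(int \<Rightarrow> 'a) measure"
  assumes "N \<subseteq> {- int r..int r}"
    and "stochastic N \<phi>"
    and "\<mu> \<in> shift_inv_measures" and "\<nu> \<in> shift_inv_measures"
  shows "dM (pca_act N \<phi> \<mu>) (pca_act N \<phi> \<nu>) \<le> 2 ^ r * dM \<mu> \<nu>"
proof -
  note st = assms(2)
  have fN: "finite N" using assms(1) finite_subset by blast
  have S1: "sets \<mu> = sets config_space" and pr1: "prob_space \<mu>"
    using assms(3) unfolding shift_inv_measures_def by auto
  have S2: "sets \<nu> = sets config_space" and pr2: "prob_space \<nu>"
    using assms(4) unfolding shift_inv_measures_def by auto
  define c where "c = (\<lambda>n::nat. cyl_dist {- int n..int n} \<mu> \<nu>)"
  define d where "d = (\<lambda>n::nat. cyl_dist {- int n..int n} (pca_act N \<phi> \<mu>) (pca_act N \<phi> \<nu>))"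
  define g where "g = (\<lambda>n::nat. (1/2::real)^n * c n)"
  have c0: "0 \<le> c n" and c1: "c n \<le> 1" for n
    unfolding c_def using cyl_dist_bounds[OF S1 pr1 S2 pr2] by auto
  have d0: "0 \<le> d n" for n unfolding d_def cyl_dist_def by (simp add: sum_nonneg)
  have dc: "d n \<le> c (n + r)" for n
    unfolding d_def c_def
  proof (rule cyl_dist_le[OF st fN S1 pr1 S2 pr2])
    fix i j assume "i \<in> {- int n..int n}" "j \<in> N"
    then show "i + j \<in> {- int (n + r)..int (n + r)}" using assms(1) by auto
  qed auto
  have g0: "0 \<le> g n" for n unfolding g_def using c0 by simp
  have sg: "summable g"
  proof (rule summable_comparison_test[where g="\<lambda>n. (1/2::real)^n"])
    show "\<exists>N. \<forall>n\<ge>N. norm (g n) \<le> (1/2::real)^n"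
      using c0 c1 unfolding g_def by (intro exI[of _ 0]) (auto simp: mult_left_le)
    show "summable (\<lambda>n. (1/2::real)^n)" by (rule summable_geometric) simp
  qed
  have sgr: "summable (\<lambda>n. g (n + r))" using sg by (rule summable_ignore_initial_segment)
  have key: "(1/2::real)^n * d n \<le> 2^r * g (n + r)" for n
  proof -
    have "(1/2::real)^n * d n \<le> (1/2)^n * c (n + r)" using dc by (simp add: mult_left_mono)
    also have "\<dots> = 2^r * g (n + r)" unfolding g_def by (simp add: power_add power_one_over)
    finally show ?thesis .
  qed
  have sd: "summable (\<lambda>n. (1/2::real)^n * d n)"
  proof (rule summable_comparison_test[where g="\<lambda>n. 2^r * g (n + r)"])
    show "\<exists>N. \<forall>n\<ge>N. norm ((1/2::real)^n * d n) \<le> 2^r * g (n + r)"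
      using key d0 by (intro exI[of _ 0]) simp
    show "summable (\<lambda>n. 2^r * g (n + r))" using sgr by (rule summable_mult)
  qed
  have "dM (pca_act N \<phi> \<mu>) (pca_act N \<phi> \<nu>) = (\<Sum>n. (1/2::real)^n * d n)"
    unfolding dM_def d_def ..
  also have "\<dots> \<le> (\<Sum>n. 2^r * g (n + r))"
    by (rule suminf_le[OF key sd]) (rule summable_mult[OF sgr])
  also have "\<dots> = 2^r * (\<Sum>n. g (n + r))" by (rule suminf_mult[OF sgr])
  also have "\<dots> \<le> 2^r * (\<Sum>n. g n)"
  proof -
    have "(\<Sum>n. g n) = (\<Sum>n. g (n + r)) + (\<Sum>i<r. g i)" by (rule suminf_split_initial_segment[OF sg])
    moreover have "0 \<le> (\<Sum>i<r. g i)" using g0 by (simp add: sum_nonneg)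
    ultimately show ?thesis by simp
  qed
  also have "\<dots> = 2^r * dM \<mu> \<nu>" unfolding dM_def g_def c_def ..
  finally show ?thesis .
qed

end
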